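(* There is an absolute constant $C$ such that for all positive integers $n$, $\mathrm{sf}(\Lambda(R\cup L))\le 2^{Cn}\, s(\lfloor0.15n\rfloor)^{0.8n}$.
   Context: $R=\{(x,y)\in\mathbb{R}^2:0.7n\le x+y\le n,\ |x-y|\le0.8n\}$, $L=\{(x,y)\in\mathbb{R}^2:2\lceil0.7n\rceil\le x+y\le1.7n,\ |x-y|\le0.4n\}$, $\Lambda(X)=\mathbb{Z}^2\cap X$. $\mathrm{sf}(Y)$ is the number of sum-free subsets of $Y$ (no $a,b,c$, not necessarily distinct, with $a+b=c$, coordinatewise addition). For $m\ge 0$, $s(m)=\mathrm{sf}(\{1,3,4\}\times[m])$ where $[m]=\{1,\dots,m\}$, viewed as a subset of $\mathbb{Z}^2$. *)

theory Defs
  imports Complex_Main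
begin

definition padd :: "int \<times> int \<Rightarrow> int \<times> int \<Rightarrow> int \<times> int" where
  "padd a b = (fst a + fst b, snd a + snd b)"

definition sum_free :: "(int \<times> int) set \<Rightarrow> bool" where
  "sum_free A \<longleftrightarrow> (\<forall>a\<in>A. \<forall>b\<in>A. \<forall>c\<in>A. padd a b \<noteq> c)"

definition sf :: "(int \<times> int) set \<Rightarrow> nat" where
  "sf Y = card {A. A \<subseteq> Y \<and> sum_free A}"

definition regionR :: "nat \<Rightarrow> (real \<times> real) set" where
  "regionR n = {(x, y). 0.7 * real n \<le> x + y \<and> x + y \<le> real n \<and> \<bar>x - y\<bar> \<le> 0.8 * real n}"

definition regionL :: "nat \<Rightarrow> (real \<times> real) set" where
  "regionL n = {(x, y). 2 * real_of_int \<lceil>0.7 * real n\<rceil> \<le> x + y \<and> x + y \<le> 1.7 * real n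
                 \<and> \<bar>x - y\<bar> \<le> 0.4 * real n}"

definition Lam :: "(real \<times> real) set \<Rightarrow> (int \<times> int) set" where
  "Lam X = {p. (real_of_int (fst p), real_of_int (snd p)) \<in> X}"

definition s_fun :: "nat \<Rightarrow> nat" where
  "s_fun m = sf ({1, 3, 4} \<times> {1 .. int m})"

end

theory Submission
  imports Defs
begin


lemma sum_free_subset: "sum_free B \<Longrightarrow> A \<subseteq> B \<Longrightarrow> sum_free A"
  unfolding sum_free_def by blast

lemma sf_fin: "finite B \<Longrightarrow> finite {S. S \<subseteq> B \<and> sum_free S}"
  by (rule finite_subset[of _ "Pow B"]) auto

lemma sf_mono: "finite B \<Longrightarrow> A \<subseteq> B \<Longrightarrow> sf A \<le> sf B"
  unfolding sf_def by (rule card_mono[OF sf_fin]) auto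

lemma sf_le_pow: "finite A \<Longrightarrow> sf A \<le> 2 ^ card A"
proof -
  assume f: "finite A"
  have "sf A \<le> card (Pow A)" unfolding sf_def by (rule card_mono) (use f in auto)
  thus ?thesis using card_Pow[of A] f by simp
qed

lemma sf_pos: "finite A \<Longrightarrow> sf A \<ge> 1"
proof -
  assume f: "finite A"
  have "{} \<in> {S. S \<subseteq> A \<and> sum_free S}" by (auto simp: sum_free_def)
  hence "card {S. S \<subseteq> A \<and> sum_free S} \<noteq> 0" using sf_fin[OF f] by auto
  thus ?thesis unfolding sf_def by simp
qed

lemma sf_union: "finite A \<Longrightarrow> finite B \<Longrightarrow> sf (A \<union> B) \<le> sf A * sf B"
proof -
  assume fA: "finite A" and fB: "finite B"
  let ?f = "\<lambda>S. (S \<inter> A, S \<inter> B)"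
  have "sf (A \<union> B) \<le> card ({S. S \<subseteq> A \<and> sum_free S} \<times> {S. S \<subseteq> B \<and> sum_free S})"
    unfolding sf_def
  proof (rule card_inj_on_le)
    show "inj_on ?f {S. S \<subseteq> A \<union> B \<and> sum_free S}"
      by (rule inj_onI) auto
    show "?f ` {S. S \<subseteq> A \<union> B \<and> sum_free S} \<subseteq> {S. S \<subseteq> A \<and> sum_free S} \<times> {S. S \<subseteq> B \<and> sum_free S}"
      using sum_free_subset by blast
    show "finite ({S. S \<subseteq> A \<and> sum_free S} \<times> {S. S \<subseteq> B \<and> sum_free S})"
      using sf_fin fA fB by auto
  qed
  thus ?thesis by (simp add: card_cartesian_product sf_def)
qed

lemma sf_UN: "finite I \<Longrightarrow> (\<forall>i\<in>I. finite (F i)) \<Longrightarrow> sf (\<Union>i\<in>I. F i) \<le> (\<Prod>i\<in>I. sf (F i))"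
proof (induction I rule: finite_induct)
  case empty
  have "{S. S \<subseteq> {} \<and> sum_free S} = {{}}" by (auto simp: sum_free_def)
  then show ?case by (simp add: sf_def)
next
  case (insert x I)
  have "sf (\<Union>i\<in>insert x I. F i) = sf (F x \<union> (\<Union>i\<in>I. F i))" by simp
  also have "\<dots> \<le> sf (F x) * sf (\<Union>i\<in>I. F i)"
    by (rule sf_union) (use insert in auto)
  also have "\<dots> \<le> sf (F x) * (\<Prod>i\<in>I. sf (F i))"
    using insert by simp
  finally show ?case using insert by simp
qed

definition piece :: "int \<times> int \<Rightarrow> int \<times> int \<Rightarrow> nat \<Rightarrow> (int \<times> int) set" where
  "piece P Q m = (\<lambda>j. padd P (j,j)) ` {1..int m} \<union> (\<lambda>j. padd Q (j,j)) ` {1..int m}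
     \<union> (\<lambda>j. padd (padd P Q) (j,j)) ` {1..int m}"

definition phi :: "int \<times> int \<Rightarrow> int \<times> int \<Rightarrow> int \<times> int \<Rightarrow> int \<times> int" where
  "phi P Q d = padd (if fst d = 1 then P else if fst d = 3 then Q else padd P Q) (snd d, snd d)"

lemma piece_img: "piece P Q m = phi P Q ` ({1,3,4} \<times> {1..int m})"
proof (rule set_eqI, rule iffI)
  fix z assume "z \<in> piece P Q m"
  then obtain j where j: "j \<in> {1..int m}" and
    z: "z = padd P (j,j) \<or> z = padd Q (j,j) \<or> z = padd (padd P Q) (j,j)"
    unfolding piece_def by blast
  have i1: "phi P Q (1,j) = padd P (j,j)" by (simp add: phi_def)
  have i3: "phi P Q (3,j) = padd Q (j,j)" by (simp add: phi_def)
  have i4: "phi P Q (4,j) = padd (padd P Q) (j,j)" by (simp add: phi_def)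
  have m1: "(1,j) \<in> {1,3,4::int} \<times> {1..int m}" "(3,j) \<in> {1,3,4::int} \<times> {1..int m}"
    "(4,j) \<in> {1,3,4::int} \<times> {1..int m}" using j by auto
  show "z \<in> phi P Q ` ({1,3,4} \<times> {1..int m})"
    using z image_eqI[where f="phi P Q", OF i1[symmetric] m1(1)] image_eqI[where f="phi P Q", OF i3[symmetric] m1(2)] image_eqI[where f="phi P Q", OF i4[symmetric] m1(3)]
    by metis
next
  fix z assume "z \<in> phi P Q ` ({1,3,4} \<times> {1..int m})"
  then obtain k j where kj: "k \<in> {1,3,4}" "j \<in> {1..int m}" and z: "z = phi P Q (k,j)" by blast
  from kj(1) have "k = 1 \<or> k = 3 \<or> k = 4" by simp
  then show "z \<in> piece P Q m"
  proof (elim disjE)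
    assume "k = 1" thus ?thesis using z kj unfolding piece_def phi_def by simp
  next
    assume "k = 3" thus ?thesis using z kj unfolding piece_def phi_def by simp
  next
    assume "k = 4" thus ?thesis using z kj unfolding piece_def phi_def by simp
  qed
qed

lemma piece_fin: "finite (piece P Q m)"
  unfolding piece_def by auto

lemma phi_add: assumes "a \<in> {1,3,4} \<times> {1..int m}" "b \<in> {1,3,4} \<times> {1..int m}"
   "c \<in> {1,3,4} \<times> {1..int m}" "padd a b = c"
  shows "padd (phi P Q a) (phi P Q b) = phi P Q c"
proof -
  obtain a1 a2 b1 b2 c1 c2 where e: "a = (a1,a2)" "b = (b1,b2)" "c = (c1,c2)" by (cases a, cases b, cases c) auto
  have "a1 \<in> {1,3,4}" "b1 \<in> {1,3,4}" "c1 \<in> {1,3,4}" "a1 + b1 = c1" "a2 + b2 = c2"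
    using assms unfolding e padd_def by auto
  hence "(a1 = 1 \<and> b1 = 3 \<and> c1 = 4) \<or> (a1 = 3 \<and> b1 = 1 \<and> c1 = 4)" by auto
  thus ?thesis using \<open>a2 + b2 = c2\<close> unfolding e phi_def padd_def by auto
qed

lemma preimg_sf:
  assumes sf: "sum_free S"
  shows "sum_free {d \<in> {1,3,4} \<times> {1..int m}. phi P Q d \<in> S}"
  unfolding sum_free_def
proof (intro ballI notI)
  fix a b c assume a: "a \<in> {d \<in> {1,3,4} \<times> {1..int m}. phi P Q d \<in> S}"
    and b: "b \<in> {d \<in> {1,3,4} \<times> {1..int m}. phi P Q d \<in> S}"
    and c: "c \<in> {d \<in> {1,3,4} \<times> {1..int m}. phi P Q d \<in> S}" and e: "padd a b = c"
  have "padd (phi P Q a) (phi P Q b) = phi P Q c"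
    by (rule phi_add[where m=m]) (use a b c e in simp_all)
  moreover have "phi P Q a \<in> S" "phi P Q b \<in> S" "phi P Q c \<in> S" using a b c by simp_all
  ultimately show False using sf unfolding sum_free_def by blast
qed

lemma preimg_img:
  assumes "S \<subseteq> piece P Q m"
  shows "S = phi P Q ` {d \<in> {1,3,4} \<times> {1..int m}. phi P Q d \<in> S}"
proof
  show "S \<subseteq> phi P Q ` {d \<in> {1,3,4} \<times> {1..int m}. phi P Q d \<in> S}"
  proof
    fix z assume z: "z \<in> S"
    hence "z \<in> phi P Q ` ({1,3,4} \<times> {1..int m})" using assms piece_img by blast
    then obtain d where "d \<in> {1,3,4} \<times> {1..int m}" "z = phi P Q d" by blast
    thus "z \<in> phi P Q ` {d \<in> {1,3,4} \<times> {1..int m}. phi P Q d \<in> S}" using z by blast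
  qed
qed blast

lemma sf_piece: "sf (piece P Q m) \<le> s_fun m"
  unfolding sf_def s_fun_def
proof (rule card_inj_on_le)
  let ?g = "\<lambda>S. {d \<in> {1,3,4} \<times> {1..int m}. phi P Q d \<in> S}"
  show "inj_on ?g {S. S \<subseteq> piece P Q m \<and> sum_free S}"
  proof (rule inj_onI)
    fix S T assume S: "S \<in> {S. S \<subseteq> piece P Q m \<and> sum_free S}"
      and T: "T \<in> {S. S \<subseteq> piece P Q m \<and> sum_free S}" and e: "?g S = ?g T"
    have "S = phi P Q ` ?g S" using S preimg_img by blast
    moreover have "T = phi P Q ` ?g T" using T preimg_img by blast
    ultimately show "S = T" using e by simp
  qed
  show "?g ` {S. S \<subseteq> piece P Q m \<and> sum_free S} \<subseteq> {S. S \<subseteq> {1,3,4} \<times> {1..int m} \<and> sum_free S}"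
  proof
    fix X assume "X \<in> ?g ` {S. S \<subseteq> piece P Q m \<and> sum_free S}"
    then obtain S where "sum_free S" "X = ?g S" by blast
    thus "X \<in> {S. S \<subseteq> {1,3,4} \<times> {1..int m} \<and> sum_free S}" using preimg_sf by blast
  qed
  show "finite {S. S \<subseteq> {1,3,4} \<times> {1..int m} \<and> sum_free S}" by (rule sf_fin) auto
qed



definition aa :: "int \<Rightarrow> int \<Rightarrow> int" where "aa c v = (c + v + 1) div 2 - 1"
definition Pb :: "int \<Rightarrow> int \<Rightarrow> int \<times> int" where "Pb c v = (aa c v, aa c v - v)"
definition yy :: "int \<Rightarrow> int \<Rightarrow> int" where "yy N x = (if x \<le> N then x - N else x - 3 * N - 1)"

definition TT :: "int \<Rightarrow> int \<Rightarrow> int \<Rightarrow> int \<Rightarrow> (int \<times> int) set" where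
  "TT n c m N = {p. (fst p + snd p \<in> {c+2*m .. c+2*m+2} \<union> {2*c+2*m-2 .. 2*c+2*m+2} \<and> \<bar>fst p - snd p\<bar> \<le> 2*n)
     \<or> (fst p - snd p \<in> {-N} \<union> {2*N+1..2*N+3} \<union> {-2*N-3..-2*N-1} \<and> 0 \<le> fst p + snd p \<and> fst p + snd p \<le> 2*n)}"

lemma mem1: "1 \<le> j \<Longrightarrow> j \<le> int m \<Longrightarrow> padd P (j,j) \<in> piece P Q m"
  unfolding piece_def by (intro UnI1 image_eqI[OF refl]) simp
lemma mem3: "1 \<le> j \<Longrightarrow> j \<le> int m \<Longrightarrow> padd Q (j,j) \<in> piece P Q m"
  unfolding piece_def by (intro UnI1 UnI2 image_eqI[OF refl]) simp
lemma mem4: "1 \<le> j \<Longrightarrow> j \<le> int m \<Longrightarrow> padd (padd P Q) (j,j) \<in> piece P Q m"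
  unfolding piece_def by (intro UnI2 image_eqI[OF refl]) simp

lemma colR:
  fixes x y c v :: int
  assumes "x - y = v" "c \<le> x + y" "x + y < c + 2 * int m"
  shows "\<exists>j. 1 \<le> j \<and> j \<le> int m \<and> (x,y) = padd (Pb c v) (j,j)"
proof -
  define q where "q = (c + v + 1) div 2"
  have q: "2 * q \<le> c + v + 1" "c + v \<le> 2 * q" unfolding q_def by linarith+
  have "1 \<le> x - aa c v \<and> x - aa c v \<le> int m" using assms q unfolding aa_def q_def[symmetric] by presburger
  moreover have "(x,y) = padd (Pb c v) (x - aa c v, x - aa c v)"
    using assms by (simp add: padd_def Pb_def)
  ultimately show ?thesis by blast
qed

lemma colL:
  fixes x y c u w :: int
  assumes "x - y = u + w" "2 * c \<le> x + y" "x + y < 2 * c + 2 * int m - 2"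
  shows "\<exists>j. 1 \<le> j \<and> j \<le> int m \<and> (x,y) = padd (padd (Pb c u) (Pb c w)) (j,j)"
proof -
  define q where "q = (c + u + 1) div 2"
  have q: "2 * q \<le> c + u + 1" "c + u \<le> 2 * q" unfolding q_def by linarith+
  define r where "r = (c + w + 1) div 2"
  have r: "2 * r \<le> c + w + 1" "c + w \<le> 2 * r" unfolding r_def by linarith+
  have "1 \<le> x - aa c u - aa c w \<and> x - aa c u - aa c w \<le> int m" using assms q r unfolding aa_def q_def[symmetric] r_def[symmetric] by presburger
  moreover have "(x,y) = padd (padd (Pb c u) (Pb c w)) (x - aa c u - aa c w, x - aa c u - aa c w)"
    using assms by (simp add: padd_def Pb_def)
  ultimately show ?thesis by blast
qed

lemma coverR:
  fixes x y c N n :: int and m :: nat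
  assumes "c \<le> x + y" "x + y \<le> n" "\<bar>x - y\<bar> \<le> 2*N+1" "n \<le> c + 2*int m + 2" "N \<ge> 0" "2*N \<le> n" "0 \<le> c"
  shows "(x,y) \<in> TT n c m N \<union> (\<Union>i\<in>{1..2*N}. piece (Pb c i) (Pb c (yy N i)) m)"
proof (cases "(x,y) \<in> TT n c m N")
  case True then show ?thesis by blast
next
  case False
  hence h: "x + y < c + 2 * int m" and v: "x - y \<noteq> -N" "\<bar>x - y\<bar> \<le> 2*N"
    using assms unfolding TT_def by auto
  obtain j where j: "1 \<le> j" "j \<le> int m" "(x,y) = padd (Pb c (x-y)) (j,j)"
    using colR[OF refl assms(1) h] by blast
  consider "1 \<le> x - y" | "1 - N \<le> x - y \<and> x - y \<le> 0" | "x - y \<le> -N - 1" using v by linarith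
  then show ?thesis
  proof cases
    case 1
    hence "(x,y) \<in> piece (Pb c (x-y)) (Pb c (yy N (x-y))) m" using mem1 j by metis
    then show ?thesis using 1 v by auto
  next
    case 2
    hence "yy N (x - y + N) = x - y" by (simp add: yy_def)
    hence "(x,y) \<in> piece (Pb c (x-y+N)) (Pb c (yy N (x-y+N))) m" using mem3 j by metis
    then show ?thesis using 2 v by auto
  next
    case 3
    hence "yy N (x - y + 3*N+1) = x - y" using v unfolding yy_def abs_le_iff by presburger
    hence "(x,y) \<in> piece (Pb c (x-y+3*N+1)) (Pb c (yy N (x-y+3*N+1))) m" using mem3 j by metis
    moreover have "x-y+3*N+1 \<in> {1..2*N}" using 3 v unfolding abs_le_iff by simp
    ultimately show ?thesis by blast
  qed
qed

lemma coverL: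
  fixes x y c N n :: int and m :: nat
  assumes "2*c \<le> x + y" "x + y \<le> 2*c + 2*int m + 2" "\<bar>x - y\<bar> \<le> N" "x + y \<le> 2*n" "N \<ge> 0" "2*N+1 \<le> 2*n" "0 \<le> c"
  shows "(x,y) \<in> TT n c m N \<union> (\<Union>i\<in>{1..2*N}. piece (Pb c i) (Pb c (yy N i)) m)"
proof (cases "(x,y) \<in> TT n c m N")
  case True then show ?thesis by blast
next
  case False
  have absn: "\<bar>x - y\<bar> \<le> 2*n" using assms by linarith
  have h: "x + y < 2 * c + 2 * int m - 2"
  proof (rule ccontr)
    assume "\<not> x + y < 2 * c + 2 * int m - 2"
    hence "(x,y) \<in> TT n c m N" using assms(2) absn unfolding TT_def by simp
    thus False using False by blast
  qed
  have v: "x - y \<noteq> -N"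
  proof
    assume "x - y = -N"
    moreover have "0 \<le> x + y" using assms by linarith
    ultimately have "(x,y) \<in> TT n c m N" using assms(4) unfolding TT_def by simp
    thus False using False by blast
  qed
  have vb: "-N < x - y" "x - y \<le> N" using assms(3) v unfolding abs_le_iff by auto
  obtain i where i: "1 \<le> i" "i \<le> 2*N" "i + yy N i = x - y"
  proof (cases "even (x - y + N)")
    case True
    then obtain i where i: "x - y + N = 2 * i" by (rule evenE)
    have "0 < i" using i vb by linarith
    moreover have "i \<le> N" using i vb by linarith
    moreover have "yy N i = i - N" using \<open>i \<le> N\<close> by (simp add: yy_def)
    ultimately have "1 \<le> i" "i \<le> 2*N" "i + yy N i = x - y" using i assms(5) by linarith+
    thus ?thesis by (rule that)
  next
    case False
    have "x - y + 3*N + 1 = (x - y + N) + 2 * N + 1" by simp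
    hence "even (x - y + 3*N + 1)" using False by simp
    then obtain i where i: "x - y + 3*N + 1 = 2 * i" by (rule evenE)
    have "N < i" using i vb by linarith
    moreover have "2 * i \<le> 4 * N + 1" using i vb by linarith
    hence "i \<le> 2 * N" by presburger
    moreover have "yy N i = i - 3 * N - 1" using \<open>N < i\<close> by (simp add: yy_def)
    ultimately have "1 \<le> i" "i \<le> 2*N" "i + yy N i = x - y" using i assms(5) by linarith+
    thus ?thesis by (rule that)
  qed
  obtain j where j: "1 \<le> j" "j \<le> int m" "(x,y) = padd (padd (Pb c i) (Pb c (yy N i))) (j,j)"
    using colL[OF i(3)[symmetric] assms(1) h] by blast
  hence "(x,y) \<in> piece (Pb c i) (Pb c (yy N i)) m" using mem4 by metis
  then show ?thesis using i by auto
qed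



definition gg :: "int \<times> int \<Rightarrow> int \<times> int" where "gg q = ((snd q + fst q) div 2, (snd q - fst q) div 2)"

lemma card_TT:
  fixes n c m N :: int
  assumes "n \<ge> 1" "N \<ge> 0"
  shows "card (TT n c m N) \<le> 61 * n" "finite (TT n c m N)"
proof -
  let ?g = gg
  let ?S1 = "{-2*n..2*n} \<times> ({c+2*m..c+2*m+2} \<union> {2*c+2*m-2..2*c+2*m+2})"
  let ?S2 = "({-N} \<union> {2*N+1..2*N+3} \<union> {-2*N-3..-2*N-1}) \<times> {0..2*n}"
  have sub: "TT n c m N \<subseteq> ?g ` ?S1 \<union> ?g ` ?S2"
  proof
    fix p assume p: "p \<in> TT n c m N"
    obtain x y where xy: "p = (x,y)" by (cases p)
    have e: "p = gg (x - y, x + y)" using xy by (auto simp: gg_def)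
    have "(x-y, x+y) \<in> ?S1 \<or> (x-y, x+y) \<in> ?S2" using p unfolding xy TT_def by auto
    then show "p \<in> ?g ` ?S1 \<union> ?g ` ?S2"
      using e by blast
  qed
  have c1: "card ?S1 \<le> nat (4*n+1) * 8"
  proof -
    have "card ({c+2*m..c+2*m+2} \<union> {2*c+2*m-2..2*c+2*m+2}) \<le> 8"
      by (rule order.trans[OF card_Un_le]) simp
    thus ?thesis by (simp add: card_cartesian_product)
  qed
  have c2: "card ?S2 \<le> 7 * nat (2*n+1)"
  proof -
    have "card ({-N} \<union> {2*N+1..2*N+3} \<union> {-2*N-3..-2*N-1}) \<le> 7"
      by (rule order.trans[OF card_Un_le], rule order.trans[OF add_mono[OF card_Un_le order.refl]]) simp
    thus ?thesis by (simp add: card_cartesian_product)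
  qed
  have fin: "finite (?g ` ?S1 \<union> ?g ` ?S2)" by auto
  have "card (TT n c m N) \<le> card (?g ` ?S1 \<union> ?g ` ?S2)" by (rule card_mono[OF fin sub])
  also have "\<dots> \<le> card (?g ` ?S1) + card (?g ` ?S2)" by (rule card_Un_le)
  also have "\<dots> \<le> card ?S1 + card ?S2" by (intro add_mono card_image_le) auto
  finally have "int (card (TT n c m N)) \<le> int (nat (4*n+1) * 8 + 7 * nat (2*n+1))" using c1 c2 by linarith
  thus "card (TT n c m N) \<le> 61 * n" using assms by simp
  show "finite (TT n c m N)" using finite_subset[OF sub fin] .
qed



theorem mainTheorem9:
  shows "\<exists>C::real. \<forall>n::nat. n > 0 \<longrightarrow>
    real (sf (Lam (regionR n \<union> regionL n)))
      \<le> 2 powr (C * real n) * real (s_fun (nat \<lfloor>0.15 * real n\<rfloor>)) powr (0.8 * real n)"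
proof (intro exI allI impI)
  fix n :: nat assume n0: "n > 0"
  define c where "c = \<lceil>0.7 * real n\<rceil>"
  define m where "m = nat \<lfloor>0.15 * real n\<rfloor>"
  define N where "N = \<lfloor>0.4 * real n\<rfloor>"
  define Y where "Y = Lam (regionR n \<union> regionL n)"
  define U where "U = (\<Union>i\<in>{1..2*N}. piece (Pb c i) (Pb c (yy N i)) m)"
  define T where "T = TT (int n) c (int m) N"
  have n1: "real n \<ge> 1" using n0 by simp
  have c1: "real_of_int c \<ge> 0.7 * real n" "real_of_int c < 0.7 * real n + 1"
    unfolding c_def by linarith+
  have mm: "real m = real_of_int \<lfloor>0.15 * real n\<rfloor>" unfolding m_def by simp
  have m1: "real m \<le> 0.15 * real n" "real m > 0.15 * real n - 1"
    unfolding mm by linarith+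
  have N1: "real_of_int N \<le> 0.4 * real n" "real_of_int N > 0.4 * real n - 1" "N \<ge> 0"
    unfolding N_def by linarith+
  have "real_of_int 0 \<le> real_of_int c" using c1 n1 by (simp; linarith)
  hence c0: "c \<ge> 0" by (simp only: of_int_le_iff)
  have cov: "Y \<subseteq> T \<union> U"
  proof
    fix p assume p: "p \<in> Y"
    obtain x y where xy: "p = (x,y)" by (cases p)
    from p consider "(real_of_int x, real_of_int y) \<in> regionR n" | "(real_of_int x, real_of_int y) \<in> regionL n"
      unfolding Y_def Lam_def xy by auto
    then show "p \<in> T \<union> U"
    proof cases
      case 1
      hence r: "0.7 * real n \<le> real_of_int (x + y)" "real_of_int (x + y) \<le> real n"
        "real_of_int \<bar>x - y\<bar> \<le> 0.8 * real n" unfolding regionR_def by auto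
      have a1: "c \<le> x + y" unfolding c_def using r(1) by (simp add: ceiling_le_iff)
      have "real_of_int (x + y) \<le> real_of_int (int n)" using r(2) by simp
      hence a2: "x + y \<le> int n" by (simp only: of_int_le_iff)
      have "real_of_int \<bar>x - y\<bar> < real_of_int (2*N+2)" using r(3) N1 by (simp; linarith)
      hence "\<bar>x - y\<bar> < 2*N+2" by (simp only: of_int_less_iff)
      hence a3: "\<bar>x - y\<bar> \<le> 2*N+1" by linarith
      have "real_of_int (int n) \<le> real_of_int (c + 2 * int m + 2)" using c1 m1 by simp
      hence a4: "int n \<le> c + 2 * int m + 2" by (simp only: of_int_le_iff)
      have "real_of_int (2*N) \<le> real_of_int (int n)" using N1 by (simp; linarith)
      hence a5: "2*N \<le> int n" by (simp only: of_int_le_iff)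
      show ?thesis using coverR[OF a1 a2 a3 a4 N1(3) a5 c0] unfolding xy T_def U_def .
    next
      case 2
      hence r: "2 * real_of_int c \<le> real_of_int (x + y)" "real_of_int (x + y) \<le> 1.7 * real n"
        "real_of_int \<bar>x - y\<bar> \<le> 0.4 * real n" unfolding regionL_def c_def by auto
      have "real_of_int (2*c) \<le> real_of_int (x + y)" using r(1) by simp
      hence a1: "2*c \<le> x + y" by (simp only: of_int_le_iff)
      have "real_of_int (x + y) \<le> real_of_int (2*c + 2 * int m + 2)" using r(2) c1 m1 by simp
      hence a2: "x + y \<le> 2*c + 2 * int m + 2" by (simp only: of_int_le_iff)
      have "real_of_int \<bar>x - y\<bar> < real_of_int (N+1)" using r(3) N1 by (simp; linarith)
      hence "\<bar>x - y\<bar> < N+1" by (simp only: of_int_less_iff)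
      hence a3: "\<bar>x - y\<bar> \<le> N" by linarith
      have "real_of_int (x + y) \<le> real_of_int (2 * int n)" using r(2) by (simp; linarith)
      hence a4: "x + y \<le> 2 * int n" by (simp only: of_int_le_iff)
      have "real_of_int (2*N+1) \<le> real_of_int (2 * int n)" using N1 n1 by (simp; linarith)
      hence a5: "2*N+1 \<le> 2 * int n" by (simp only: of_int_le_iff)
      show ?thesis using coverL[OF a1 a2 a3 a4 N1(3) a5 c0] unfolding xy T_def U_def .
    qed
  qed
  have Tf: "finite T" "card T \<le> 61 * int n" using card_TT[of "int n" N c "int m"] n0 N1 unfolding T_def by auto
  have Uf: "finite U" unfolding U_def using piece_fin by auto
  let ?s = "s_fun m"
  have s1: "?s \<ge> 1" unfolding s_fun_def by (rule sf_pos) auto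
  have "sf Y \<le> sf (T \<union> U)" by (rule sf_mono) (use Tf Uf cov in auto)
  also have "\<dots> \<le> sf T * sf U" by (rule sf_union[OF Tf(1) Uf])
  also have "\<dots> \<le> 2 ^ card T * ?s ^ card {1..2*N}"
  proof (rule mult_mono)
    show "sf T \<le> 2 ^ card T" by (rule sf_le_pow[OF Tf(1)])
    have "sf U \<le> (\<Prod>i\<in>{1..2*N}. sf (piece (Pb c i) (Pb c (yy N i)) m))"
      unfolding U_def by (rule sf_UN) (auto simp: piece_fin)
    also have "\<dots> \<le> (\<Prod>i\<in>{1..2*N}. ?s)" by (rule prod_mono) (auto simp: sf_piece)
    finally show "sf U \<le> ?s ^ card {1..2*N}" by simp
  qed auto
  finally have "real (sf Y) \<le> real (2 ^ card T * ?s ^ card {1..2*N})"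
    by (simp only: of_nat_le_iff)
  hence main: "real (sf Y) \<le> 2 ^ card T * real ?s ^ card {1..2*N}" by simp
  have "card {1..2*N} = nat (2*N)" by simp
  moreover have "real (nat (2*N)) = real_of_int (2*N)" using N1 by simp
  ultimately have k: "real (card {1..2*N}) \<le> 0.8 * real n" using N1 by simp
  have "(2::real) ^ card T = 2 powr (real (card T))" by (simp add: powr_realpow)
  also have "\<dots> \<le> 2 powr (61 * real n)"
  proof (rule powr_mono)
    have "card T \<le> 61 * n" using Tf(2) by linarith
    hence "real (card T) \<le> real (61 * n)" by (simp only: of_nat_le_iff)
    thus "real (card T) \<le> 61 * real n" by simp
  qed simp
  finally have A: "(2::real) ^ card T \<le> 2 powr (61 * real n)" .
  have "real ?s ^ card {1..2*N} = real ?s powr (real (card {1..2*N}))" using s1 by (simp add: powr_realpow)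
  also have "\<dots> \<le> real ?s powr (0.8 * real n)" using s1 k by (intro powr_mono) auto
  finally have B: "real ?s ^ card {1..2*N} \<le> real ?s powr (0.8 * real n)" .
  have "real (sf Y) \<le> 2 powr (61 * real n) * real ?s powr (0.8 * real n)"
  proof -
    have "(2::real) ^ card T * real ?s ^ card {1..2*N} \<le> 2 powr (61 * real n) * real ?s powr (0.8 * real n)"
      by (rule mult_mono[OF A B]) simp_all
    thus ?thesis using main by linarith
  qed
  thus "real (sf (Lam (regionR n \<union> regionL n)))
      \<le> 2 powr (61 * real n) * real (s_fun (nat \<lfloor>0.15 * real n\<rfloor>)) powr (0.8 * real n)"
    unfolding Y_def m_def .
qed


end
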